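(* Let $r\geq 1$ be an integer and let $D$ be either $D=1$ or a prime number $D\geq 2$. Then there exists a sequence of integers $\underline{\alpha}:\ \alpha_1<\alpha_2<\cdots<\alpha_{rD}$ with $\alpha_1\geq 2$ such that $\Delta_{r,D}(\underline{\alpha})\neq 0$.
   Context: $B_n(x)$ denotes the $n$-th Bernoulli polynomial, defined by $\frac{ze^{xz}}{e^z-1}=\sum_{n\ge 0}B_n(x)\frac{z^n}{n!}$. For integers $r,D\geq 1$ and integers $\alpha_1<\cdots<\alpha_{rD}$ with $\alpha_1\ge 2$, $\Delta_{r,D}(\underline{\alpha})$ is the determinant of the $rD\times rD$ matrix whose entry in row $j$ ($1\le j\le rD$) and column $mD+v$ ($0\le m\le r-1$, $1\le v\le D$) is $\dfrac{D^{\alpha_j}B_{\alpha_j+m}(v/D)}{\alpha_j+m}$. *)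

theory Defs
  imports Complex_Main "Jordan_Normal_Form.Determinant"
begin

text \<open>Bernoulli numbers (convention B_1 = -1/2), via the standard recursion
  sum_{k=0}^{n} C(n+1,k) B_k = 0 for n >= 1, B_0 = 1.\<close>
fun bernoulli_num :: "nat \<Rightarrow> real" where
  "bernoulli_num n = (if n = 0 then 1 else
     - (\<Sum>k<n. real (Suc n choose k) * (if k < n then bernoulli_num k else 0)) / real (Suc n))"

text \<open>Bernoulli polynomials B_n(x) = sum_k C(n,k) B_k x^(n-k), which agree with the
  generating function z e^(xz)/(e^z-1).\<close>
definition bernpoly :: "nat \<Rightarrow> real \<Rightarrow> real" where
  "bernpoly n x = (\<Sum>k\<le>n. real (n choose k) * bernoulli_num k * x ^ (n - k))"

text \<open>The rD x rD matrix: 0-based row i corresponds to alpha_{i+1}; 0-based column c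
  corresponds to (m, v) with c = m*D + (v-1), i.e. m = c div D, v = c mod D + 1.\<close>
definition Delta_mat :: "nat \<Rightarrow> nat \<Rightarrow> (nat \<Rightarrow> nat) \<Rightarrow> real mat" where
  "Delta_mat r D \<alpha> = mat (r*D) (r*D) (\<lambda>(i, c).
     let m = c div D; v = c mod D + 1 in
     real D ^ \<alpha> i * bernpoly (\<alpha> i + m) (real v / real D) / real (\<alpha> i + m))"

definition Delta :: "nat \<Rightarrow> nat \<Rightarrow> (nat \<Rightarrow> nat) \<Rightarrow> real" where
  "Delta r D \<alpha> = det (Delta_mat r D \<alpha>)"

end

theory Submission
  imports Defs "HOL-Computational_Algebra.Polynomial_FPS"
begin

lemma map_poly_add_hom:
  assumes "f 0 = 0" "\<And>a b. f (a + b) = f a + f b"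
  shows "map_poly f (p + q) = map_poly f p + map_poly f q"
  by (rule poly_eqI) (simp add: coeff_map_poly assms)

lemma map_poly_mult_hom:
  fixes f :: "'a::comm_ring_1 \<Rightarrow> 'b::comm_ring_1"
  assumes "f 0 = 0" "\<And>a b. f (a + b) = f a + f b" "\<And>a b. f (a * b) = f a * f b"
  shows "map_poly f (p * q) = map_poly f p * map_poly f q"
proof (induction p)
  case 0 then show ?case by (simp add: assms)
next
  case (pCons a p)
  have sm: "map_poly f (smult a q) = smult (f a) (map_poly f q)"
    by (rule poly_eqI) (simp add: coeff_map_poly assms)
  show ?case
    by (simp add: map_poly_add_hom[OF assms(1,2)] sm map_poly_pCons assms(1) pCons.IH)
qed

definition ev :: "real poly poly \<Rightarrow> real fps" where
  "ev P = poly (map_poly fps_of_poly P) (fps_exp 1)"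

lemma ev_add: "ev (P + Q) = ev P + ev Q"
  unfolding ev_def by (simp add: map_poly_add_hom fps_of_poly_add)

lemma ev_mult: "ev (P * Q) = ev P * ev Q"
  unfolding ev_def by (simp add: map_poly_mult_hom fps_of_poly_add fps_of_poly_mult)

lemma ev_diff: "ev (P - Q) = ev P - ev Q"
  using ev_add[of "P - Q" Q] by simp

lemma ev_0: "ev 0 = 0" unfolding ev_def by simp

lemma ev_const: "ev [:a:] = fps_of_poly a"
  unfolding ev_def by (simp add: map_poly_pCons)

lemma ev_1: "ev 1 = 1" unfolding ev_def by simp

lemma ev_power: "ev (P ^ n) = ev P ^ n"
  by (induction n) (simp_all add: ev_1 ev_mult)

lemma ev_sum: "ev (sum f A) = (\<Sum>x\<in>A. ev (f x))"
  by (induction A rule: infinite_finite_induct) (simp_all add: ev_add ev_0)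

lemma ev_monom: "ev (monom a n) = fps_of_poly a * fps_exp (real n)"
  unfolding ev_def by (simp add: map_poly_monom poly_monom fps_exp_power_mult)

lemma ev_altdef: 
  assumes "degree P \<le> N"
  shows "ev P = (\<Sum>j\<le>N. fps_of_poly (coeff P j) * fps_exp (real j))"
proof -
  have "P = (\<Sum>j\<le>N. monom (coeff P j) j)" using assms by (simp add: poly_as_sum_of_monoms')
  then have "ev P = ev (\<Sum>j\<le>N. monom (coeff P j) j)" by simp
  also have "\<dots> = (\<Sum>j\<le>N. fps_of_poly (coeff P j) * fps_exp (real j))"
    by (simp add: ev_sum ev_monom)
  finally show ?thesis .
qed

lemma ev_smult: "ev (smult c Q) = fps_of_poly c * ev Q"
proof -
  have "smult c Q = [:c:] * Q" by simp
  then show ?thesis by (simp only: ev_mult ev_const)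
qed

definition dlt :: "real poly poly \<Rightarrow> real poly poly" where
  "dlt P = map_poly pderiv P + pCons 0 (pderiv P)"

lemma coeff_dlt: "coeff (dlt P) j = pderiv (coeff P j) + of_nat j * coeff P j"
  by (cases j) (simp_all add: dlt_def coeff_map_poly coeff_pderiv)

lemma degree_dlt: "degree (dlt P) \<le> degree P"
  by (rule degree_le) (simp add: coeff_dlt coeff_eq_0)

lemma ev_deriv: "fps_deriv (ev P) = ev (dlt P)"
proof -
  let ?N = "degree P"
  have "fps_deriv (ev P) = (\<Sum>j\<le>?N. fps_deriv (fps_of_poly (coeff P j) * fps_exp (real j)))"
    by (simp add: ev_altdef[OF order.refl] fps_deriv_sum)
  also have "\<dots> = (\<Sum>j\<le>?N. fps_of_poly (coeff (dlt P) j) * fps_exp (real j))"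
  proof (rule sum.cong[OF refl])
    fix j
    show "fps_deriv (fps_of_poly (coeff P j) * fps_exp (real j)) =
          fps_of_poly (coeff (dlt P) j) * fps_exp (real j)"
      by (simp add: coeff_dlt fps_of_poly_add fps_of_poly_mult fps_of_poly_pderiv of_nat_poly
          fps_of_poly_const algebra_simps)
  qed
  also have "\<dots> = ev (dlt P)" by (rule ev_altdef[symmetric]) (rule degree_dlt)
  finally show ?thesis .
qed

lemma ev_inj_aux: "\<forall>P. degree P \<le> n \<longrightarrow> ev P = 0 \<longrightarrow> P = 0"
proof (induction n)
  case 0
  show ?case
  proof (intro allI impI)
    fix P :: "real poly poly" assume "degree P \<le> 0" "ev P = 0"
    then have "P = [:coeff P 0:]" by (metis degree_0_id le_zero_eq)
    with \<open>ev P = 0\<close> have "fps_of_poly (coeff P 0) = 0" by (metis ev_const)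
    then have "coeff P 0 = 0" by (metis fps_of_poly_0 fps_of_poly_eq_iff)
    then show "P = 0" using \<open>P = [:coeff P 0:]\<close> by simp
  qed
next
  case (Suc n)
  show ?case
  proof (intro allI impI)
    fix P :: "real poly poly" assume dP: "degree P \<le> Suc n" and e0: "ev P = 0"
    define a where "a = coeff P (Suc n)"
    define Lam where "Lam = (\<lambda>Q. dlt Q - [:[:real (Suc n):]:] * Q)"
    define Lj where "Lj = (\<lambda>j (p::real poly). pderiv p + smult (real j - real (Suc n)) p)"
    have evL: "ev (Lam Q) = fps_deriv (ev Q) - fps_const (real (Suc n)) * ev Q" for Q
      unfolding Lam_def by (simp add: ev_diff ev_mult ev_deriv ev_const fps_of_poly_const ev_smult)
    have cL: "coeff (Lam Q) j = Lj j (coeff Q j)" for Q j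
      unfolding Lam_def Lj_def by (simp add: coeff_dlt of_nat_poly algebra_simps smult_diff_left)
    define k where "k = Suc (degree a)"
    have ev0: "ev ((Lam^^i) P) = 0" for i
      by (induction i) (simp_all add: e0 evL)
    have cLi: "coeff ((Lam^^i) P) j = (Lj j ^^ i) (coeff P j)" for i j
      by (induction i) (simp_all add: cL)
    have pd0: "degree p < i \<Longrightarrow> (pderiv^^i) p = 0" for i and p :: "real poly"
    proof (induction i arbitrary: p)
      case 0 then show ?case by simp
    next
      case (Suc i)
      have "(pderiv^^Suc i) p = (pderiv^^i) (pderiv p)" by (simp add: funpow_Suc_right del: funpow.simps)
      also have "\<dots> = 0"
      proof (cases i)
        case 0
        with Suc.prems have "pderiv p = 0" by (simp add: pderiv_eq_0_iff)
        with 0 show ?thesis by simp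
      next
        case (Suc i')
        then show ?thesis using Suc.IH Suc.prems degree_pderiv[of p] by simp
      qed
      finally show ?case .
    qed
    have LjSn: "Lj (Suc n) = pderiv" unfolding Lj_def by auto
    have Lj_inj: "Lj j p = 0 \<Longrightarrow> j \<noteq> Suc n \<Longrightarrow> p = 0" for j p
    proof (rule ccontr)
      assume h: "Lj j p = 0" "j \<noteq> Suc n" "p \<noteq> 0"
      have "coeff (Lj j p) (degree p) = (real j - real (Suc n)) * lead_coeff p"
        unfolding Lj_def by (simp add: coeff_pderiv coeff_eq_0)
      with h show False by simp
    qed
    have Lji_inj: "(Lj j ^^ i) p = 0 \<Longrightarrow> j \<noteq> Suc n \<Longrightarrow> p = 0" for i j p
      by (induction i) (auto dest: Lj_inj)
    have Lj0: "(Lj j ^^ i) 0 = 0" for i j by (induction i) (simp_all add: Lj_def)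
    have "degree ((Lam^^k) P) \<le> n"
    proof (rule degree_le, intro allI impI)
      fix i assume "n < i"
      show "coeff ((Lam ^^ k) P) i = 0"
      proof (cases "i = Suc n")
        case True
        then show ?thesis unfolding cLi using LjSn pd0[of a k] by (simp add: a_def k_def)
      next
        case False
        with \<open>n < i\<close> dP have "coeff P i = 0" by (simp add: coeff_eq_0)
        then show ?thesis by (simp add: cLi Lj0)
      qed
    qed
    with Suc.IH ev0 have z: "(Lam^^k) P = 0" by blast
    have low: "coeff P j = 0" if "j \<le> n" for j
    proof -
      have "coeff ((Lam^^k) P) j = 0" using z by simp
      then have "(Lj j ^^ k) (coeff P j) = 0" by (simp only: cLi)
      moreover have "j \<noteq> Suc n" using that by arith
      ultimately show ?thesis by (rule Lji_inj)
    qed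
    have "P = monom a (Suc n)"
    proof (rule poly_eqI)
      fix j show "coeff P j = coeff (monom a (Suc n)) j"
        using low[of j] dP by (cases "j \<le> n") (auto simp: a_def coeff_monom coeff_eq_0)
    qed
    with e0 have "fps_of_poly a * fps_exp (real (Suc n)) = 0" by (simp add: ev_monom)
    moreover have "fps_exp (real (Suc n)) \<noteq> 0"
    proof
      assume "fps_exp (real (Suc n)) = 0"
      then have "fps_nth (fps_exp (real (Suc n))) 0 = 0" by simp
      then show False by simp
    qed
    ultimately have "fps_of_poly a = 0" by simp
    then have "a = 0" by (metis fps_of_poly_0 fps_of_poly_eq_iff)
    then show "P = 0" using \<open>P = monom a (Suc n)\<close> by simp
  qed
qed

lemma ev_inj: "ev P = 0 \<Longrightarrow> P = 0"
  using ev_inj_aux by blast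

lemma ev_eq_iff: "ev P = ev Q \<longleftrightarrow> P = Q"
  using ev_inj[of "P - Q"] by (auto simp: ev_diff)

definition cst :: "real \<Rightarrow> real poly poly" where "cst a = [:[:a:]:]"
definition Xp :: "real poly poly" where "Xp = [:[:0,1:]:]"

lemma cst_mult: "cst a * cst b = cst (a * b)" by (simp add: cst_def)
lemma cst_add: "cst a + cst b = cst (a + b)" by (simp add: cst_def)
lemma cst_1: "cst 1 = 1" by (simp add: cst_def one_pCons)
lemma ev_cst: "ev (cst a) = fps_const a" by (simp add: cst_def ev_const fps_of_poly_const)
lemma ev_Xp: "ev Xp = fps_X" by (simp add: Xp_def ev_const)
lemma dlt_cst: "dlt (cst a) = 0"
  by (rule poly_eqI) (simp add: coeff_dlt cst_def coeff_pCons split: nat.splits)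
lemma dlt_Xp: "dlt Xp = 1"
  by (rule poly_eqI) (simp add: coeff_dlt Xp_def coeff_pCons pderiv_pCons split: nat.splits)

lemma G_rec:
  fixes h F :: "real fps"
  defines "G \<equiv> \<lambda>k. fps_X ^ (k+1) * h ^ (k+1) * (fps_deriv ^^ k) F"
  shows "G (Suc k) = fps_X * h * fps_deriv (G k) - fps_const (real (Suc k)) * (h + fps_X * fps_deriv h) * G k"
proof -
  define c where "c = fps_const (real (Suc k))"
  define A :: "real fps" where "A = fps_X ^ (Suc k)"
  define B where "B = h ^ (Suc k)"
  define C where "C = (fps_deriv ^^ k) F"
  have dA: "fps_deriv A = c * fps_X ^ k" unfolding A_def c_def by (simp only: fps_deriv_power fps_deriv_fps_X diff_Suc_1 mult_1_right)
  have dB: "fps_deriv B = c * fps_deriv h * h ^ k" unfolding B_def c_def by (simp only: fps_deriv_power diff_Suc_1)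
  have A: "A = fps_X * fps_X ^ k" unfolding A_def by simp
  have B: "B = h * h ^ k" unfolding B_def by simp
  have Gk: "G k = A * B * C" unfolding G_def A_def B_def C_def by simp
  have GS: "G (Suc k) = fps_X * A * (h * B) * fps_deriv C" unfolding G_def A_def B_def C_def by simp
  have "fps_deriv (G k) = fps_deriv A * B * C + A * fps_deriv B * C + A * B * fps_deriv C"
    unfolding Gk by (simp add: algebra_simps)
  then have "fps_X * h * fps_deriv (G k) - c * (h + fps_X * fps_deriv h) * G k
     = fps_X * h * (c * fps_X ^ k) * B * C + fps_X * h * A * (c * fps_deriv h * h ^ k) * C
       + fps_X * h * A * B * fps_deriv C - c * (h + fps_X * fps_deriv h) * (A * B * C)"
    unfolding dA dB Gk by (simp add: algebra_simps)
  also have "\<dots> = c * h * (fps_X * fps_X ^ k) * B * C + c * fps_X * fps_deriv h * A * (h * h ^ k) * C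
       + fps_X * h * A * B * fps_deriv C - c * (h + fps_X * fps_deriv h) * (A * B * C)"
    by (simp add: algebra_simps)
  also have "\<dots> = fps_X * A * (h * B) * fps_deriv C"
    unfolding A[symmetric] B[symmetric] by (simp add: algebra_simps)
  finally show ?thesis unfolding GS c_def by simp
qed

primrec PsiR :: "real poly poly \<Rightarrow> real poly poly \<Rightarrow> nat \<Rightarrow> real poly poly" where
  "PsiR H P0 0 = P0"
| "PsiR H P0 (Suc k) = Xp * H * dlt (PsiR H P0 k) - cst (real (Suc k)) * (H + Xp * dlt H) * PsiR H P0 k"

lemma ev_PsiR:
  assumes "ev P0 = fps_X * ev H * F"
  shows "ev (PsiR H P0 k) = fps_X ^ (k+1) * ev H ^ (k+1) * (fps_deriv ^^ k) F"
proof (induction k)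
  case 0 then show ?case using assms by simp
next
  case (Suc k)
  have "ev (PsiR H P0 (Suc k)) = fps_X * ev H * fps_deriv (ev (PsiR H P0 k))
     - fps_const (real (Suc k)) * (ev H + fps_X * fps_deriv (ev H)) * ev (PsiR H P0 k)"
    by (simp add: ev_diff ev_mult ev_add ev_cst ev_Xp ev_deriv)
  also have "\<dots> = fps_X ^ (Suc k+1) * ev H ^ (Suc k+1) * (fps_deriv ^^ Suc k) F"
    unfolding Suc.IH using G_rec[where h="ev H" and F=F and k=k] by simp
  finally show ?case .
qed

lemma PsiR_mod:
  assumes "dlt H = cst Dr * (H + 1)"
  shows "\<exists>Q. PsiR H P0 k = cst ((- Dr) ^ k * fact k) * Xp ^ k * P0 + H * Q"
proof (induction k)
  case 0 then show ?case by (auto simp: cst_1 intro: exI[of _ 0])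
next
  case (Suc k)
  then obtain Q where Q: "PsiR H P0 k = cst ((- Dr) ^ k * fact k) * Xp ^ k * P0 + H * Q" by blast
  let ?P = "PsiR H P0 k"
  define Q' where "Q' = Xp * dlt ?P - cst (real (Suc k)) * ?P - cst (real (Suc k)) * cst Dr * Xp * ?P
     - cst (real (Suc k)) * cst Dr * Xp * Q"
  have c: "cst ((- Dr) ^ Suc k * fact (Suc k)) = - (cst (real (Suc k)) * cst Dr * cst ((- Dr) ^ k * fact k))"
    by (simp add: cst_mult cst_def)
  have "PsiR H P0 (Suc k) = H * (Xp * dlt ?P - cst (real (Suc k)) * ?P - cst (real (Suc k)) * cst Dr * Xp * ?P)
      - cst (real (Suc k)) * cst Dr * Xp * ?P"
    by (simp add: assms algebra_simps cst_1)
  also have "\<dots> = cst ((- Dr) ^ Suc k * fact (Suc k)) * Xp ^ Suc k * P0 + H * Q'"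
    unfolding c Q'_def by (subst (3) Q) (simp add: algebra_simps)
  finally show ?case by blast
qed

definition ev1 :: "real poly poly \<Rightarrow> real poly" where "ev1 P = map_poly (\<lambda>a. poly a 1) P"

lemma ev1_mult: "ev1 (P * Q) = ev1 P * ev1 Q"
  unfolding ev1_def by (rule map_poly_mult_hom) simp_all

lemma ev1_cst: "ev1 (cst a) = [:a:]" by (simp add: ev1_def cst_def map_poly_pCons)
lemma ev1_Xp: "ev1 Xp = 1" by (simp add: ev1_def Xp_def map_poly_pCons one_pCons)
lemma ev1_power: "ev1 (P ^ n) = ev1 P ^ n"
  by (induction n) (simp_all add: ev1_mult, simp add: ev1_def)
lemma ev1_lift: "ev1 (map_poly (\<lambda>c. [:c:]) p) = p"
  unfolding ev1_def by (simp add: map_poly_map_poly o_def)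

lemma ev1_dvd: "P dvd Q \<Longrightarrow> ev1 P dvd ev1 Q"
  by (auto simp: ev1_mult)

lemma dvd_cyc_zero:
  fixes p :: "real poly"
  assumes "D \<ge> 1" "degree p \<le> D" "coeff p 0 = 0" "(monom 1 D - 1) dvd p"
  shows "p = 0"
proof (rule ccontr)
  assume nz: "p \<noteq> 0"
  from assms(4) obtain q where q: "p = (monom 1 D - 1) * q" by (auto elim: dvdE)
  have dh: "degree (monom 1 D - 1 :: real poly) = D"
  proof -
    have "(monom 1 D - 1 :: real poly) = monom 1 D + (- 1)" by simp
    also have "degree \<dots> = D" using assms(1) by (subst degree_add_eq_left) (simp_all add: degree_monom_eq)
    finally show ?thesis .
  qed
  have hnz: "(monom 1 D - 1 :: real poly) \<noteq> 0" using dh assms(1) by auto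
  have qnz: "q \<noteq> 0" using nz q by auto
  have "degree p = D + degree q" using q hnz qnz dh by (simp add: degree_mult_eq)
  with assms(2) have "degree q = 0" by simp
  then obtain s where s: "q = [:s:]" by (metis degree_0_id)
  have "coeff p 0 = - s" using q s assms(1) by (simp add: coeff_monom)
  with assms(3) have "s = 0" by simp
  with s qnz show False by simp
qed

declare bernoulli_num.simps[simp del]

lemma bern_rec: "m \<ge> 1 \<Longrightarrow> (\<Sum>k\<le>m. real (Suc m choose k) * bernoulli_num k) = 0"
proof -
  assume m: "m \<ge> 1"
  have b: "bernoulli_num m = - (\<Sum>k<m. real (Suc m choose k) * bernoulli_num k) / real (Suc m)"
    using m by (subst bernoulli_num.simps) (auto intro!: sum.cong)
  have "(\<Sum>k\<le>m. real (Suc m choose k) * bernoulli_num k)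
      = (\<Sum>k<m. real (Suc m choose k) * bernoulli_num k) + real (Suc m) * bernoulli_num m"
    by (simp add: lessThan_Suc_atMost[symmetric])
  also have "\<dots> = 0" unfolding b by (simp add: field_simps)
  finally show ?thesis .
qed

lemma bern_sum: "n \<ge> 2 \<Longrightarrow> (\<Sum>k<n. real (n choose k) * bernoulli_num k) = 0"
  using bern_rec[of "n - 1"] by (cases n) (simp_all add: lessThan_Suc_atMost)

definition Bf :: "nat \<Rightarrow> real fps" where
  "Bf D = Abs_fps (\<lambda>k. bernoulli_num k * real D ^ k / fact k)"

lemma Bf_nth: "fps_nth (Bf D) k = bernoulli_num k * real D ^ k / fact k"
  by (simp add: Bf_def)

lemma Bf_eq: "Bf D * (fps_exp (real D) - 1) = fps_const (real D) * fps_X"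
proof (rule fps_ext)
  fix n
  have "fps_nth (Bf D * (fps_exp (real D) - 1)) n
     = (\<Sum>i=0..n. fps_nth (Bf D) i * fps_nth (fps_exp (real D) - 1) (n - i))"
    by (rule fps_mult_nth)
  also have "\<dots> = (\<Sum>i<n. bernoulli_num i * real D ^ i / fact i * (real D ^ (n - i) / fact (n - i)))"
  proof -
    have "(\<Sum>i=0..n. fps_nth (Bf D) i * fps_nth (fps_exp (real D) - 1) (n - i))
       = (\<Sum>i\<in>{..<n} \<union> {n}. fps_nth (Bf D) i * fps_nth (fps_exp (real D) - 1) (n - i))"
      by (rule sum.cong) auto
    also have "\<dots> = (\<Sum>i<n. fps_nth (Bf D) i * fps_nth (fps_exp (real D) - 1) (n - i))"
      by simp
    finally show ?thesis by (simp add: Bf_nth)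
  qed
  also have "\<dots> = real D ^ n / fact n * (\<Sum>i<n. real (n choose i) * bernoulli_num i)"
    unfolding sum_distrib_left
  proof (rule sum.cong[OF refl])
    fix i assume "i \<in> {..<n}"
    then have i: "i \<le> n" by simp
    have "real (n choose i) = fact n / (fact i * fact (n - i))"
      using binomial_fact[OF i] by simp
    moreover have "real D ^ n = real D ^ i * real D ^ (n - i)"
      using i by (simp add: power_add[symmetric])
    ultimately show "bernoulli_num i * real D ^ i / fact i * (real D ^ (n - i) / fact (n - i)) =
       real D ^ n / fact n * (real (n choose i) * bernoulli_num i)"
      by (simp add: field_simps)
  qed
  also have "\<dots> = fps_nth (fps_const (real D) * fps_X) n"
  proof (cases "n \<ge> 2")
    case True then show ?thesis by (simp add: bern_sum)
  next
    case False
    then have "n = 0 \<or> n = 1" by auto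
    then show ?thesis by (auto simp: bernoulli_num.simps)
  qed
  finally show "fps_nth (Bf D * (fps_exp (real D) - 1)) n = fps_nth (fps_const (real D) * fps_X) n" .
qed

lemma G_nth:
  assumes "D \<ge> 1"
  shows "fps_nth (Bf D * fps_exp (real v)) n = real D ^ n * bernpoly n (real v / real D) / fact n"
proof -
  have "fps_nth (Bf D * fps_exp (real v)) n
     = (\<Sum>i=0..n. bernoulli_num i * real D ^ i / fact i * (real v ^ (n - i) / fact (n - i)))"
    by (simp add: fps_mult_nth Bf_nth)
  also have "\<dots> = (\<Sum>i\<le>n. real D ^ n / fact n * (real (n choose i) * bernoulli_num i * (real v / real D) ^ (n - i)))"
  proof (rule sum.cong)
    fix i assume "i \<in> {..n}"
    then have i: "i \<le> n" by simp
    have "real (n choose i) = fact n / (fact i * fact (n - i))"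
      using binomial_fact[OF i] by simp
    moreover have "real D ^ n = real D ^ i * real D ^ (n - i)"
      using i by (simp add: power_add[symmetric])
    moreover have "real D \<noteq> 0" using assms by simp
    ultimately show "bernoulli_num i * real D ^ i / fact i * (real v ^ (n - i) / fact (n - i)) =
       real D ^ n / fact n * (real (n choose i) * bernoulli_num i * (real v / real D) ^ (n - i))"
      by (simp add: field_simps power_divide)
  qed auto
  also have "\<dots> = real D ^ n * bernpoly n (real v / real D) / fact n"
    unfolding bernpoly_def sum_distrib_left[symmetric] by simp
  finally show ?thesis .
qed

definition Fm :: "nat \<Rightarrow> nat \<Rightarrow> nat \<Rightarrow> nat \<Rightarrow> real" where
  "Fm D m v a = real D ^ a * bernpoly (a + m) (real v / real D) / real (a + m)"

lemma Fm_G: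
  assumes "D \<ge> 1" "a \<ge> 1"
  shows "Fm D m v a = fact (a + m - 1) / real D ^ m * fps_nth (Bf D * fps_exp (real v)) (a + m)"
proof -
  obtain b where b: "a + m = Suc b" using assms(2) by (cases "a + m") auto
  have f: "(fact (a + m) :: real) = real (a + m) * fact (a + m - 1)" using b by simp
  have p: "real D ^ (a + m) = real D ^ a * real D ^ m" by (simp add: power_add)
  have nz: "real D ^ m \<noteq> 0" "real (a + m) \<noteq> 0" "(fact (a + m - 1) :: real) \<noteq> 0" using assms b by auto
  have aux: "x \<noteq> 0 \<Longrightarrow> y \<noteq> 0 \<Longrightarrow> z \<noteq> 0 \<Longrightarrow> P * Bv / x = y / z * (P * z * Bv / (x * y))"
    for x y z P Bv :: real by (simp add: field_simps)
  show ?thesis unfolding Fm_def G_nth[OF assms(1)] f p by (rule aux[OF nz(2,3,1)])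
qed

lemma deriv_nth: fixes f :: "real fps" shows "fps_nth ((fps_deriv ^^ k) f) j = fps_nth f (j + k) * fact (j + k) / fact j"
proof (induction k arbitrary: j)
  case 0 then show ?case using fact_gt_zero[of j, where 'a=real] by simp
next
  case (Suc k)
  have "fps_nth ((fps_deriv ^^ Suc k) f) j = real (j + 1) * fps_nth ((fps_deriv ^^ k) f) (j + 1)"
    by simp
  also have "\<dots> = fps_nth f (j + Suc k) * fact (j + Suc k) / fact j"
  proof -
    have e: "j + 1 + k = j + Suc k" by simp
    have fs: "(fact (j + 1) :: real) = real (j + 1) * fact j" by simp
    have nz: "real (j + 1) \<noteq> 0" "(fact j :: real) \<noteq> 0" by auto
    have aux: "r \<noteq> 0 \<Longrightarrow> y \<noteq> 0 \<Longrightarrow> r * (F * G / (r * y)) = F * G / y" for r y F G :: real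
      by (simp add: field_simps)
    show ?thesis unfolding Suc.IH e fs by (rule aux[OF nz])
  qed
  finally show ?case .
qed

lemma ev1_add: "ev1 (P + Q) = ev1 P + ev1 Q"
  unfolding ev1_def by (rule map_poly_add_hom) simp_all
lemma ev1_sum: "ev1 (sum f A) = (\<Sum>x\<in>A. ev1 (f x))"
  by (induction A rule: infinite_finite_induct) (simp_all add: ev1_add, simp_all add: ev1_def)
lemma ev1_monom: "ev1 (monom a n) = monom (poly a 1) n"
  unfolding ev1_def by (simp add: map_poly_monom)

lemma core:
  fixes c :: "nat \<Rightarrow> nat \<Rightarrow> real"
  assumes D: "D \<ge> 1"
    and rel: "\<forall>a\<ge>A. (\<Sum>m<Suc M. \<Sum>v\<in>{1..D}. c m v * Fm D m v a) = 0"
  shows "\<forall>v\<in>{1..D}. c M v = 0"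
proof -
  define A' where "A' = max A 1"
  define pm where "pm = (\<lambda>m. \<Sum>v\<in>{1..D}. monom [:c m v:] v :: real poly poly)"
  define U where "U = (\<lambda>m. Bf D * ev (pm m))"
  define T where "T = (\<lambda>m. fps_shift 1 (U m))"
  define S where "S = (\<Sum>m<Suc M. fps_const (1 / real D ^ m) * (fps_deriv ^^ m) (T m))"
  have evpm: "ev (pm m) = (\<Sum>v\<in>{1..D}. fps_const (c m v) * fps_exp (real v))" for m
    unfolding pm_def by (simp add: ev_sum ev_monom fps_of_poly_const)
  have Ueq: "U m = (\<Sum>v\<in>{1..D}. fps_const (c m v) * (Bf D * fps_exp (real v)))" for m
    unfolding U_def evpm sum_distrib_left by (simp add: algebra_simps)
  have Unth: "fps_nth (U m) n = (\<Sum>v\<in>{1..D}. c m v * fps_nth (Bf D * fps_exp (real v)) n)" for m n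
    unfolding Ueq by (simp add: fps_sum_nth)
  have Snth: "fps_nth S j = 0" if "j \<ge> A' - 1" for j
  proof -
    have "fps_nth S j = (\<Sum>m<Suc M. 1 / real D ^ m * (fps_nth (U m) (j + m + 1) * fact (j + m) / fact j))"
      unfolding S_def T_def by (simp add: fps_sum_nth deriv_nth)
    also have "\<dots> = (\<Sum>m<Suc M. 1 / fact j * (\<Sum>v\<in>{1..D}. c m v * Fm D m v (j + 1)))"
    proof (rule sum.cong[OF refl])
      fix m
      have "(\<Sum>v\<in>{1..D}. c m v * Fm D m v (j + 1)) =
            (\<Sum>v\<in>{1..D}. c m v * (fact (j + m) / real D ^ m * fps_nth (Bf D * fps_exp (real v)) (j + m + 1)))"
        using Fm_G[OF D, of "j + 1"] by (simp add: algebra_simps)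
      then show "1 / real D ^ m * (fps_nth (U m) (j + m + 1) * fact (j + m) / fact j) =
          1 / fact j * (\<Sum>v\<in>{1..D}. c m v * Fm D m v (j + 1))"
        unfolding Unth by (simp add: sum_distrib_left sum_divide_distrib algebra_simps)
    qed
    also have "\<dots> = 1 / fact j * (\<Sum>m<Suc M. \<Sum>v\<in>{1..D}. c m v * Fm D m v (j + 1))"
      by (rule sum_distrib_left[symmetric])
    also have "\<dots> = 0" using rel that unfolding A'_def by auto
    finally show ?thesis .
  qed
  define l where "l = (\<Sum>j<A'. monom (fps_nth S j) j)"
  have Sl: "S = fps_of_poly l"
  proof (rule fps_ext)
    fix n
    have "coeff l n = (if n < A' then fps_nth S n else 0)"
      unfolding l_def coeff_sum coeff_monom by (simp add: sum.delta)
    then show "fps_nth S n = fps_nth (fps_of_poly l) n" using Snth[of n] by auto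
  qed
  define H where "H = (monom 1 D - 1 :: real poly poly)"
  have evH: "ev H = fps_exp (real D) - 1" unfolding H_def by (simp add: ev_diff ev_monom ev_1)
  have dltH: "dlt H = cst (real D) * (H + 1)"
  proof (rule poly_eqI)
    fix j
    show "coeff (dlt H) j = coeff (cst (real D) * (H + 1)) j"
      unfolding coeff_dlt H_def cst_def using D
      by (cases "j = 0"; cases "j = D") (auto simp: coeff_monom of_nat_poly pderiv_minus)
  qed
  define c0 where "c0 = (\<lambda>m. \<Sum>v\<in>{1..D}. c m v)"
  define P0 where "P0 = (\<lambda>m. Xp * cst (real D) * pm m - cst (c0 m) * H)"
  have U0: "fps_nth (U m) 0 = c0 m" for m
    unfolding Unth c0_def by (simp add: Bf_nth bernoulli_num.simps)
  have XT: "fps_X * T m = U m - fps_const (c0 m)" for m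
  proof (rule fps_ext)
    fix n show "fps_nth (fps_X * T m) n = fps_nth (U m - fps_const (c0 m)) n"
      using U0[of m] by (cases n) (simp_all add: T_def)
  qed
  have HU: "ev H * U m = fps_const (real D) * fps_X * ev (pm m)" for m
  proof -
    have "ev H * U m = (Bf D * (fps_exp (real D) - 1)) * ev (pm m)"
      unfolding U_def evH by (simp add: algebra_simps)
    then show ?thesis unfolding Bf_eq .
  qed
  have evP0: "ev (P0 m) = fps_X * ev H * T m" for m
  proof -
    have "fps_X * ev H * T m = ev H * (fps_X * T m)" by (simp add: algebra_simps)
    also have "\<dots> = ev H * U m - fps_const (c0 m) * ev H" unfolding XT by (simp add: algebra_simps)
    also have "\<dots> = ev (P0 m)" unfolding HU P0_def by (simp add: ev_diff ev_mult ev_cst ev_Xp algebra_simps)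
    finally show ?thesis by simp
  qed
  define Psi where "Psi = (\<lambda>m. PsiR H (P0 m) m)"
  have evPsi: "ev (Psi m) = fps_X ^ (m + 1) * ev H ^ (m + 1) * (fps_deriv ^^ m) (T m)" for m
    unfolding Psi_def by (rule ev_PsiR[OF evP0])
  have main: "Xp ^ Suc M * H ^ Suc M * [:l:] = (\<Sum>m<Suc M. cst (1 / real D ^ m) * Xp ^ (M - m) * H ^ (M - m) * Psi m)"
  proof -
    have "ev (Xp ^ Suc M * H ^ Suc M * [:l:]) = fps_X ^ Suc M * ev H ^ Suc M * S"
      by (simp only: ev_mult ev_power ev_Xp ev_const Sl)
    also have "\<dots> = (\<Sum>m<Suc M. fps_const (1 / real D ^ m) * fps_X ^ (M - m) * ev H ^ (M - m) * ev (Psi m))"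
      unfolding S_def sum_distrib_left
    proof (rule sum.cong[OF refl])
      fix m assume "m \<in> {..<Suc M}"
      then have e: "Suc M = (M - m) + (m + 1)" by simp
      have x: "fps_X ^ Suc M = fps_X ^ (M - m) * fps_X ^ (m + 1)" by (subst e, rule power_add)
      have h: "ev H ^ Suc M = ev H ^ (M - m) * ev H ^ (m + 1)" by (subst e, rule power_add)
      show "fps_X ^ Suc M * ev H ^ Suc M * (fps_const (1 / real D ^ m) * (fps_deriv ^^ m) (T m)) =
         fps_const (1 / real D ^ m) * fps_X ^ (M - m) * ev H ^ (M - m) * ev (Psi m)"
        unfolding evPsi x h by (simp add: algebra_simps)
    qed
    also have "\<dots> = ev (\<Sum>m<Suc M. cst (1 / real D ^ m) * Xp ^ (M - m) * H ^ (M - m) * Psi m)"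
      by (simp only: ev_sum ev_mult ev_power ev_cst ev_Xp)
    finally show ?thesis by (simp add: ev_eq_iff)
  qed
  have dvd1: "H dvd cst (1 / real D ^ M) * Psi M"
  proof -
    have a: "H dvd Xp ^ Suc M * H ^ Suc M * [:l:]" 
      by (rule dvd_mult2[OF dvd_mult[OF dvd_power[of "Suc M"]]]) simp
    have b: "H dvd (\<Sum>m<M. cst (1 / real D ^ m) * Xp ^ (M - m) * H ^ (M - m) * Psi m)"
    proof (rule dvd_sum)
      fix m assume "m \<in> {..<M}"
      then have "0 < M - m" by simp
      then show "H dvd cst (1 / real D ^ m) * Xp ^ (M - m) * H ^ (M - m) * Psi m"
        by (intro dvd_mult2 dvd_mult dvd_power) simp
    qed
    have "cst (1 / real D ^ M) * Psi M = Xp ^ Suc M * H ^ Suc M * [:l:]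
        - (\<Sum>m<M. cst (1 / real D ^ m) * Xp ^ (M - m) * H ^ (M - m) * Psi m)"
      unfolding main by simp
    then show ?thesis using dvd_diff[OF a b] by simp
  qed
  obtain Q where Q: "Psi M = cst ((- real D) ^ M * fact M) * Xp ^ M * P0 M + H * Q"
    using PsiR_mod[OF dltH, of "P0 M" M] unfolding Psi_def by blast
  define K where "K = 1 / real D ^ M * ((- real D) ^ M * fact M) * real D"
  have Knz: "K \<noteq> 0" unfolding K_def using D by simp
  have "cst (1 / real D ^ M) * Psi M = cst K * Xp ^ Suc M * pm M
      + H * (cst (1 / real D ^ M) * Q - cst (1 / real D ^ M * ((- real D) ^ M * fact M)) * Xp ^ M * cst (c0 M))"
  proof -
    have cK: "cst K = cst (1 / real D ^ M) * cst ((- real D) ^ M * fact M) * cst (real D)"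
      by (simp add: K_def cst_mult)
    have c2: "cst (1 / real D ^ M * ((- real D) ^ M * fact M)) = cst (1 / real D ^ M) * cst ((- real D) ^ M * fact M)"
      by (simp add: cst_mult)
    show ?thesis unfolding Q P0_def cK c2 by (simp add: algebra_simps)
  qed
  then have "cst K * Xp ^ Suc M * pm M = cst (1 / real D ^ M) * Psi M
      - H * (cst (1 / real D ^ M) * Q - cst (1 / real D ^ M * ((- real D) ^ M * fact M)) * Xp ^ M * cst (c0 M))"
    by simp
  then have "H dvd cst K * Xp ^ Suc M * pm M"
    using dvd_diff[OF dvd1 dvd_triv_left] by simp
  then have "ev1 H dvd ev1 (cst K * Xp ^ Suc M * pm M)" by (rule ev1_dvd)
  moreover have "ev1 H = monom 1 D - 1"
    unfolding H_def by (rule poly_eqI) (simp add: ev1_def coeff_map_poly)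
  moreover define p0 where "p0 = (\<Sum>v\<in>{1..D}. monom (c M v) v)"
  moreover have "ev1 (cst K * Xp ^ Suc M * pm M) = smult K p0"
    unfolding pm_def p0_def by (simp add: ev1_mult ev1_cst ev1_power ev1_Xp ev1_sum ev1_monom)
  ultimately have "(monom 1 D - 1) dvd smult K p0" by simp
  then have "(monom 1 D - 1) dvd p0" using Knz by (rule dvd_smult_cancel)
  moreover have "degree p0 \<le> D" unfolding p0_def
    by (rule degree_sum_le) (auto intro: order.trans[OF degree_monom_le])
  moreover have "coeff p0 0 = 0" unfolding p0_def by (simp add: coeff_sum coeff_monom)
  ultimately have "p0 = 0" using dvd_cyc_zero[OF D] by blast
  then have "coeff p0 v = 0" for v by simp
  then have "(if Suc 0 \<le> v \<and> v \<le> D then c M v else 0) = 0" for v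
    unfolding p0_def by (simp add: coeff_sum coeff_monom)
  then show ?thesis by (metis atLeastAtMost_iff One_nat_def)
qed

lemma indep_levels:
  assumes D: "D \<ge> 1"
  shows "\<forall>c. (\<forall>a\<ge>A. (\<Sum>m<r. \<Sum>v\<in>{1..D}. c m v * Fm D m v a) = 0) \<longrightarrow> (\<forall>m<r. \<forall>v\<in>{1..D}. c m v = 0)"
proof (induction r)
  case 0 then show ?case by simp
next
  case (Suc r)
  show ?case
  proof (rule allI, rule impI)
    fix c :: "nat \<Rightarrow> nat \<Rightarrow> real"
    assume rel: "\<forall>a\<ge>A. (\<Sum>m<Suc r. \<Sum>v\<in>{1..D}. c m v * Fm D m v a) = 0"
    have top: "\<forall>v\<in>{1..D}. c r v = 0" using core[OF D rel] .
    have "\<forall>a\<ge>A. (\<Sum>m<r. \<Sum>v\<in>{1..D}. c m v * Fm D m v a) = 0"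
      using rel top by simp
    with Suc.IH have "\<forall>m<r. \<forall>v\<in>{1..D}. c m v = 0" by blast
    with top show "\<forall>m<Suc r. \<forall>v\<in>{1..D}. c m v = 0" by (auto simp: less_Suc_eq)
  qed
qed

lemma sum_lessThan_add: fixes n k :: nat shows "(\<Sum>c<n + k. g c) = (\<Sum>c<n. g c) + (\<Sum>u<k. g (n + u))"
  by (induction k) (simp_all add: add.assoc)

lemma sum_blocks: fixes r D :: nat shows "(\<Sum>c<r * D. g c) = (\<Sum>m<r. \<Sum>u<D. g (m * D + u))"
proof (induction r)
  case 0 then show ?case by simp
next
  case (Suc r)
  have "(\<Sum>c<Suc r * D. g c) = (\<Sum>c<r * D + D. g c)" by (simp add: add.commute)
  also have "\<dots> = (\<Sum>c<r * D. g c) + (\<Sum>u<D. g (r * D + u))" by (rule sum_lessThan_add)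
  finally show ?case using Suc.IH by simp
qed

lemma sum_1D: "(\<Sum>v\<in>{1..D}. h v) = (\<Sum>u<D. h (Suc u))"
  by (induction D) (simp_all add: atLeastAtMostSuc_conv add.commute)

definition fcol :: "nat \<Rightarrow> nat \<Rightarrow> nat \<Rightarrow> real" where
  "fcol D c a = (let m = c div D; v = c mod D + 1 in
     real D ^ a * bernpoly (a + m) (real v / real D) / real (a + m))"

lemma fcol_Fm: "fcol D c a = Fm D (c div D) (c mod D + 1) a"
  by (simp add: fcol_def Fm_def Let_def)

lemma indep_cols:
  assumes D: "D \<ge> 1"
  shows "\<forall>A coef. (\<forall>a\<ge>A. (\<Sum>c<r * D. coef c * fcol D c a) = 0) \<longrightarrow> (\<forall>c<r * D. coef c = 0)"
proof (rule allI, rule allI, rule impI)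
  fix A coef
  assume rel: "\<forall>a\<ge>A. (\<Sum>c<r * D. coef c * fcol D c a) = 0"
  define cc where "cc = (\<lambda>m v. coef (m * D + (v - 1)))"
  have "\<forall>a\<ge>A. (\<Sum>m<r. \<Sum>v\<in>{1..D}. cc m v * Fm D m v a) = 0"
  proof (intro allI impI)
    fix a assume "a \<ge> A"
    have "(\<Sum>m<r. \<Sum>v\<in>{1..D}. cc m v * Fm D m v a) = (\<Sum>m<r. \<Sum>u<D. coef (m * D + u) * fcol D (m * D + u) a)"
    proof (rule sum.cong[OF refl])
      fix m
      show "(\<Sum>v\<in>{1..D}. cc m v * Fm D m v a) = (\<Sum>u<D. coef (m * D + u) * fcol D (m * D + u) a)"
        unfolding sum_1D
      proof (rule sum.cong[OF refl])
        fix u assume "u \<in> {..<D}"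
        then have u: "u < D" by simp
        have "(m * D + u) div D = m" "(m * D + u) mod D = u" using u by auto
        then show "cc m (Suc u) * Fm D m (Suc u) a = coef (m * D + u) * fcol D (m * D + u) a"
          unfolding cc_def fcol_Fm by simp
      qed
    qed
    also have "\<dots> = (\<Sum>c<r * D. coef c * fcol D c a)" by (rule sum_blocks[symmetric])
    also have "\<dots> = 0" using rel \<open>a \<ge> A\<close> by simp
    finally show "(\<Sum>m<r. \<Sum>v\<in>{1..D}. cc m v * Fm D m v a) = 0" .
  qed
  with indep_levels[OF D] have z: "\<forall>m<r. \<forall>v\<in>{1..D}. cc m v = 0" by blast
  show "\<forall>c<r * D. coef c = 0"
  proof (intro allI impI)
    fix c assume c: "c < r * D"
    have "c div D < r" using c by (simp add: less_mult_imp_div_less)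
    moreover have "c mod D + 1 \<in> {1..D}" using D by (simp add: Suc_leI)
    ultimately have "cc (c div D) (c mod D + 1) = 0" using z by blast
    moreover have "c div D * D + (c mod D + 1 - 1) = c" by simp
    ultimately show "coef c = 0" unfolding cc_def by simp
  qed
qed

lemma exists_rows:
  fixes f :: "nat \<Rightarrow> nat \<Rightarrow> real"
  assumes indep: "\<forall>A coef. (\<forall>a\<ge>A. (\<Sum>c<N. coef c * f c a) = 0) \<longrightarrow> (\<forall>c<N. coef c = 0)"
  shows "k \<le> N \<Longrightarrow> \<exists>\<alpha>. (\<forall>i j. i < j \<longrightarrow> j < k \<longrightarrow> \<alpha> i < \<alpha> j) \<and> (\<forall>i<k. \<alpha> i \<ge> 2)
          \<and> det (mat k k (\<lambda>(i, c). f c (\<alpha> i))) \<noteq> 0"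
proof (induction k)
  case 0
  show ?case by (rule exI[of _ "\<lambda>_. 2"]) (simp add: det_dim_zero)
next
  case (Suc k)
  then obtain \<alpha> where inc: "\<forall>i j. i < j \<longrightarrow> j < k \<longrightarrow> \<alpha> i < \<alpha> j" and ge: "\<forall>i<k. \<alpha> i \<ge> 2"
    and dt: "det (mat k k (\<lambda>(i, c). f c (\<alpha> i))) \<noteq> 0" by auto
  define A where "A = 2 + (\<Sum>i<k. \<alpha> i)"
  have ltA: "\<alpha> i < A" if "i < k" for i
  proof -
    have "\<alpha> i \<le> (\<Sum>i<k. \<alpha> i)" using that by (intro member_le_sum) auto
    then show ?thesis unfolding A_def by simp
  qed
  define M where "M = (\<lambda>a. mat (Suc k) (Suc k) (\<lambda>(i, c). f c ((\<alpha>(k := a)) i)))"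
  have Mc: "M a \<in> carrier_mat (Suc k) (Suc k)" for a unfolding M_def by simp
  have del: "mat_delete (M a) k c = mat_delete (M A) k c" if "c < Suc k" for a c
    unfolding M_def mat_delete_def by (rule eq_matI) auto
  define cof where "cof = (\<lambda>c. cofactor (M A) k c)"
  have detM: "det (M a) = (\<Sum>c<Suc k. f c a * cof c)" for a
  proof -
    have "det (M a) = (\<Sum>c<Suc k. M a $$ (k, c) * cofactor (M a) k c)"
      by (rule laplace_expansion_row[OF Mc]) simp
    also have "\<dots> = (\<Sum>c<Suc k. f c a * cof c)"
    proof (rule sum.cong[OF refl])
      fix c assume "c \<in> {..<Suc k}"
      then have c: "c < Suc k" by simp
      have "M a $$ (k, c) = f c a" using c by (simp add: M_def)
      moreover have "cofactor (M a) k c = cof c"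
      proof -
        have e: "mat_delete (M a) k c = mat_delete (M A) k c" by (rule del[OF c])
        show ?thesis unfolding cof_def cofactor_def e ..
      qed
      ultimately show "M a $$ (k, c) * cofactor (M a) k c = f c a * cof c" by simp
    qed
    finally show ?thesis .
  qed
  have cofk: "cof k \<noteq> 0"
  proof -
    have "mat_delete (M A) k k = mat k k (\<lambda>(i, c). f c (\<alpha> i))"
      unfolding M_def mat_delete_def by (rule eq_matI) auto
    then show ?thesis using dt unfolding cof_def cofactor_def by simp
  qed
  have "\<exists>a\<ge>A. det (M a) \<noteq> 0"
  proof (rule ccontr)
    assume "\<not> (\<exists>a\<ge>A. det (M a) \<noteq> 0)"
    then have z: "\<forall>a\<ge>A. det (M a) = 0" by auto
    define coef where "coef = (\<lambda>c. if c < Suc k then cof c else 0)"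
    have "\<forall>a\<ge>A. (\<Sum>c<N. coef c * f c a) = 0"
    proof (intro allI impI)
      fix a assume "a \<ge> A"
      have "(\<Sum>c<N. coef c * f c a) = (\<Sum>c<Suc k. coef c * f c a)"
        using Suc.prems by (intro sum.mono_neutral_right) (auto simp: coef_def)
      also have "\<dots> = det (M a)" unfolding detM coef_def by (simp add: mult.commute)
      finally show "(\<Sum>c<N. coef c * f c a) = 0" using z \<open>a \<ge> A\<close> by simp
    qed
    with indep have "\<forall>c<N. coef c = 0" by blast
    then have "coef k = 0" using Suc.prems by simp
    with cofk show False by (simp add: coef_def)
  qed
  then obtain a where a: "a \<ge> A" "det (M a) \<noteq> 0" by blast
  show ?case
  proof (intro exI conjI)
    show "\<forall>i j. i < j \<longrightarrow> j < Suc k \<longrightarrow> (\<alpha>(k := a)) i < (\<alpha>(k := a)) j"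
    proof (intro allI impI)
      fix i j assume "i < j" "j < Suc k"
      then show "(\<alpha>(k := a)) i < (\<alpha>(k := a)) j"
        using inc ltA[of i] a(1) by (cases "j = k") auto
    qed
    show "\<forall>i<Suc k. 2 \<le> (\<alpha>(k := a)) i"
      using ge a(1) unfolding A_def by (auto simp: less_Suc_eq)
    show "det (mat (Suc k) (Suc k) (\<lambda>(i, c). f c ((\<alpha>(k := a)) i))) \<noteq> 0"
      using a(2) unfolding M_def .
  qed
qed

theorem theorem1p2:
  fixes r D :: nat
  assumes "r \<ge> 1"
    and "D = 1 \<or> prime D"
  shows "\<exists>\<alpha> :: nat \<Rightarrow> nat.
           (\<forall>i j. i < j \<longrightarrow> j < r * D \<longrightarrow> \<alpha> i < \<alpha> j)
         \<and> \<alpha> 0 \<ge> 2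
         \<and> Delta r D \<alpha> \<noteq> 0"
proof -
  have D: "D \<ge> 1" using assms(2) prime_ge_1_nat by auto
  have N: "r * D > 0" using D assms(1) by simp
  obtain \<alpha> where inc: "\<forall>i j. i < j \<longrightarrow> j < r * D \<longrightarrow> \<alpha> i < \<alpha> j" and ge: "\<forall>i<r * D. \<alpha> i \<ge> 2"
    and dt: "det (mat (r * D) (r * D) (\<lambda>(i, c). fcol D c (\<alpha> i))) \<noteq> 0"
    using exists_rows[OF indep_cols[OF D], of "r * D" r] by blast
  have "Delta r D \<alpha> = det (mat (r * D) (r * D) (\<lambda>(i, c). fcol D c (\<alpha> i)))"
    unfolding Delta_def Delta_mat_def fcol_def by simp
  moreover have "\<alpha> 0 \<ge> 2" using ge N by blast
  ultimately show ?thesis using inc dt by (intro exI[of _ \<alpha>] conjI) simp_all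
qed

end
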